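(* Let $X$ be a normed linear space, $F:X\rightrightarrows\mathbb{R}^p$ a set-valued map, $(x,y)\in\mathrm{gph}F$. Assume $F$ is Lipschitz around $x$ and $y\in\mathcal{PE}(F(x),P)$. Then $DF_\uparrow((x,y);0)\cap(-P)=\{0\}$, and for every $v\in X$ the sets $DF_\uparrow((x,y);v)$ and $DF((x,y);v)$ are $P$-bounded.
   Context: $P\subset\mathbb{R}^p$ is a closed convex pointed cone containing $0$ with nonempty interior; $F_\uparrow(x)=F(x)+P$. $\mathcal{E}(S,P)=\{y\in S:(y-P)\cap S=\{y\}\}$; contingent cone $T_S(z)=\{v:\exists h_k\to0^+,\exists v_k\to v,z+h_kv_k\in S\}$; $\mathcal{PE}(S,P)=\{y\in\mathcal{E}(S,P):T_{S+P}(y)\cap(-P)=\{0\}\}$. $F$ is Lipschitz around $x$ if there are $l>0$ and a neighborhood $\mathcal{O}$ of $x$ with $F(x_1)\subset F(x_2)+l\|x_1-x_2\|\mathbf{B}$ for $x_1,x_2\in\mathcal{O}$. The contingent derivative $DF(x,y)$ has graph $T_{\mathrm{gph}F}(x,y)$; value at $v$ written $DF((x,y);v)$. Recession cone of nonempty $S\subset\mathbb{R}^p$: $S^+=\{z:\exists h_k\to0^+,\exists y_k\in S,h_ky_k\to z\}$. $S$ is $P$-bounded if $S^+\cap(-P)=\{0\}$. *)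

theory Defs
  imports "HOL-Analysis.Analysis"
begin

definition msum :: "'a::real_vector set \<Rightarrow> 'a set \<Rightarrow> 'a set" where
  "msum A B = {a + b | a b. a \<in> A \<and> b \<in> B}"

definition ordering_cone :: "'b::euclidean_space set \<Rightarrow> bool" where
  "ordering_cone P \<longleftrightarrow> closed P \<and> convex P \<and> cone P \<and> 0 \<in> P
     \<and> P \<inter> uminus ` P = {0} \<and> interior P \<noteq> {}"

definition Fup :: "('a \<Rightarrow> 'b::euclidean_space set) \<Rightarrow> 'b set \<Rightarrow> 'a \<Rightarrow> 'b set" where
  "Fup F P x = msum (F x) P"

definition gph :: "('a \<Rightarrow> 'b set) \<Rightarrow> ('a \<times> 'b) set" where
  "gph F = {(x, y). y \<in> F x}"

definition contingent_cone :: "'a::real_normed_vector set \<Rightarrow> 'a \<Rightarrow> 'a set" where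
  "contingent_cone S z = {v. \<exists>h :: nat \<Rightarrow> real. \<exists>vs :: nat \<Rightarrow> 'a.
      (\<forall>k. h k > 0) \<and> h \<longlonglongrightarrow> 0 \<and> vs \<longlonglongrightarrow> v \<and> (\<forall>k. z + h k *\<^sub>R vs k \<in> S)}"

definition DF :: "('a::real_normed_vector \<Rightarrow> 'b::euclidean_space set) \<Rightarrow> 'a \<Rightarrow> 'b \<Rightarrow> 'a \<Rightarrow> 'b set" where
  "DF F x y v = {w. (v, w) \<in> contingent_cone (gph F) (x, y)}"

definition efficient :: "'b::euclidean_space set \<Rightarrow> 'b set \<Rightarrow> 'b set" where
  "efficient S P = {y \<in> S. {y - p | p. p \<in> P} \<inter> S = {y}}"

definition proper_efficient :: "'b::euclidean_space set \<Rightarrow> 'b set \<Rightarrow> 'b set" where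
  "proper_efficient S P = {y \<in> efficient S P.
       contingent_cone (msum S P) y \<inter> uminus ` P = {0}}"

definition lipschitz_around :: "('a::real_normed_vector \<Rightarrow> 'b::euclidean_space set) \<Rightarrow> 'a \<Rightarrow> bool" where
  "lipschitz_around F x \<longleftrightarrow> (\<exists>l > 0. \<exists>U. open U \<and> x \<in> U \<and>
      (\<forall>x1 \<in> U. \<forall>x2 \<in> U. F x1 \<subseteq> msum (F x2) (cball 0 (l * norm (x1 - x2)))))"

definition recession_cone :: "'b::euclidean_space set \<Rightarrow> 'b set" where
  "recession_cone S = {z. \<exists>h :: nat \<Rightarrow> real. \<exists>ys :: nat \<Rightarrow> 'b.
      (\<forall>k. h k > 0) \<and> h \<longlonglongrightarrow> 0 \<and> (\<forall>k. ys k \<in> S) \<and> (\<lambda>k. h k *\<^sub>R ys k) \<longlonglongrightarrow> z}"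

definition P_bounded :: "'b::euclidean_space set \<Rightarrow> 'b set \<Rightarrow> bool" where
  "P_bounded S P \<longleftrightarrow> recession_cone S \<inter> uminus ` P = {0}"

end

theory Submission imports Defs begin

lemma cc_iff:
  fixes S :: "'a::real_normed_vector set"
  shows "v \<in> contingent_cone S z \<longleftrightarrow>
    (\<forall>e>0. \<forall>d>0. \<exists>h u. 0 < h \<and> h < d \<and> dist u v < e \<and> z + h *\<^sub>R u \<in> S)"
proof
  assume "v \<in> contingent_cone S z"
  then obtain h vs where hp: "\<forall>k. h k > 0" and h0: "h \<longlonglongrightarrow> 0" and vv: "vs \<longlonglongrightarrow> v"
    and mem: "\<forall>k. z + h k *\<^sub>R vs k \<in> S"
    unfolding contingent_cone_def by blast
  show "\<forall>e>0. \<forall>d>0. \<exists>h u. 0 < h \<and> h < d \<and> dist u v < e \<and> z + h *\<^sub>R u \<in> S"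
  proof (intro allI impI)
    fix e d :: real assume e: "e > 0" and d: "d > 0"
    have "eventually (\<lambda>k. h k < d) sequentially" using order_tendstoD(2)[OF h0 d] .
    moreover have "eventually (\<lambda>k. dist (vs k) v < e) sequentially" using tendstoD[OF vv e] .
    ultimately obtain k where "h k < d" "dist (vs k) v < e"
      using eventually_conj eventually_sequentially order_refl by (metis (no_types, lifting))
    then show "\<exists>h u. 0 < h \<and> h < d \<and> dist u v < e \<and> z + h *\<^sub>R u \<in> S"
      using hp mem by blast
  qed
next
  assume A: "\<forall>e>0. \<forall>d>0. \<exists>h u. 0 < h \<and> h < d \<and> dist u v < e \<and> z + h *\<^sub>R u \<in> S"
  have "\<forall>k. \<exists>h u. 0 < h \<and> h < inverse (real (Suc k)) \<and> dist u v < inverse (real (Suc k)) \<and> z + h *\<^sub>R u \<in> S"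
    using A by simp
  then obtain h vs where H: "\<And>k. 0 < h k \<and> h k < inverse (real (Suc k)) \<and> dist (vs k) v < inverse (real (Suc k)) \<and> z + h k *\<^sub>R vs k \<in> S"
    by metis
  have h0: "h \<longlonglongrightarrow> 0"
  proof (rule Lim_null_comparison[OF _ LIMSEQ_inverse_real_of_nat], rule always_eventually, rule allI)
    fix k show "norm (h k) \<le> inverse (real (Suc k))" using H[of k] by simp
  qed
  have "(\<lambda>k. dist (vs k) v) \<longlonglongrightarrow> 0"
  proof (rule Lim_null_comparison[OF _ LIMSEQ_inverse_real_of_nat], rule always_eventually, rule allI)
    fix k show "norm (dist (vs k) v) \<le> inverse (real (Suc k))" using H[of k] by simp
  qed
  then have "vs \<longlonglongrightarrow> v" using tendsto_dist_iff by blast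
  then show "v \<in> contingent_cone S z" unfolding contingent_cone_def using H h0 by blast
qed

lemma cc_scale:
  fixes S :: "'a::real_normed_vector set"
  assumes "v \<in> contingent_cone S z" "c > 0"
  shows "c *\<^sub>R v \<in> contingent_cone S z"
proof -
  obtain h vs where hp: "\<forall>k. h k > 0" and h0: "h \<longlonglongrightarrow> 0" and vv: "vs \<longlonglongrightarrow> v"
    and mem: "\<forall>k. z + h k *\<^sub>R vs k \<in> S"
    using assms(1) unfolding contingent_cone_def by blast
  have "(\<lambda>k. h k / c) \<longlonglongrightarrow> 0" using tendsto_divide_zero[OF h0] .
  moreover have "(\<lambda>k. c *\<^sub>R vs k) \<longlonglongrightarrow> c *\<^sub>R v" using tendsto_scaleR[OF tendsto_const vv] .
  moreover have "\<forall>k. z + (h k / c) *\<^sub>R (c *\<^sub>R vs k) \<in> S" using mem assms(2) by simp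
  moreover have "\<forall>k. h k / c > 0" using hp assms(2) by simp
  ultimately show ?thesis unfolding contingent_cone_def
    by (intro CollectI exI[of _ "\<lambda>k. h k / c"] exI[of _ "\<lambda>k. c *\<^sub>R vs k"]) auto
qed

lemma cc_zero:
  fixes S :: "'a::real_normed_vector set"
  assumes "z \<in> S" shows "0 \<in> contingent_cone S z"
  unfolding contingent_cone_def
  by (intro CollectI exI[of _ "\<lambda>k. inverse (real (Suc k))"] exI[of _ "\<lambda>k. 0"])
     (use assms LIMSEQ_inverse_real_of_nat in auto)

lemma cc_mono: "S \<subseteq> S' \<Longrightarrow> contingent_cone S z \<subseteq> contingent_cone S' z"
  unfolding contingent_cone_def by blast

lemma rc_mono: "S \<subseteq> S' \<Longrightarrow> recession_cone S \<subseteq> recession_cone S'"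
  unfolding recession_cone_def by blast

lemma rc_zero: assumes "s \<in> S" shows "0 \<in> recession_cone S"
proof -
  have "(\<lambda>k. inverse (real (Suc k)) *\<^sub>R s) \<longlonglongrightarrow> 0 *\<^sub>R s"
    using tendsto_scaleR[OF LIMSEQ_inverse_real_of_nat tendsto_const] .
  then show ?thesis unfolding recession_cone_def
    by (intro CollectI exI[of _ "\<lambda>k. inverse (real (Suc k))"] exI[of _ "\<lambda>k. s"])
       (use assms LIMSEQ_inverse_real_of_nat in auto)
qed


lemma lemB:
  fixes F :: "'a::real_normed_vector \<Rightarrow> 'b::euclidean_space set"
  assumes l: "l > 0" and r: "r > 0" and U: "ball x r \<subseteq> U"
    and L: "\<forall>x1\<in>U. \<forall>x2\<in>U. F x1 \<subseteq> msum (F x2) (cball 0 (l * norm (x1 - x2)))"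
    and z: "z \<in> recession_cone (DF (Fup F P) x y v)"
  shows "z \<in> contingent_cone (msum (F x) P) y"
  unfolding cc_iff
proof (intro allI impI)
  fix e d :: real assume e: "e > 0" and d: "d > 0"
  obtain t ys where tp: "\<forall>k. t k > 0" and t0: "t \<longlonglongrightarrow> 0" and ysm: "\<forall>k. ys k \<in> DF (Fup F P) x y v"
    and tz: "(\<lambda>k. t k *\<^sub>R ys k) \<longlonglongrightarrow> z"
    using z unfolding recession_cone_def by blast
  define C where "C = 1 + l * (norm v + 1)"
  have "(\<lambda>k. t k * C) \<longlonglongrightarrow> 0 * C" using tendsto_mult[OF t0 tendsto_const] .
  then have "eventually (\<lambda>k. t k * C < e/2) sequentially" using e by (intro order_tendstoD(2)) auto
  moreover have "eventually (\<lambda>k. dist (t k *\<^sub>R ys k) z < e/2) sequentially"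
    using tendstoD[OF tz, of "e/2"] e by simp
  ultimately obtain k where k1: "t k * C < e/2" and k2: "dist (t k *\<^sub>R ys k) z < e/2"
    using eventually_conj eventually_sequentially order_refl by (metis (no_types, lifting))
  define tk where "tk = t k"
  define w where "w = ys k"
  have tk: "tk > 0" using tp tk_def by simp
  have "(v, w) \<in> contingent_cone (gph (Fup F P)) (x, y)" using ysm w_def unfolding DF_def by simp
  moreover have dpos: "min (d * tk) (r / (norm v + 1)) > 0"
  proof -
    have "norm v + 1 > 0" by (simp add: add_nonneg_pos)
    then show ?thesis using tk d r by simp
  qed
  ultimately obtain h q where h: "0 < h" "h < min (d * tk) (r / (norm v + 1))" and dq: "dist q (v, w) < 1"
    and qm: "(x, y) + h *\<^sub>R q \<in> gph (Fup F P)"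
    unfolding cc_iff by (meson zero_less_one)
  obtain u w' where q: "q = (u, w')" by (cases q)
  have du: "dist u v < 1" using dq q dist_fst_le[of q "(v,w)"] by simp
  have dw: "dist w' w < 1" using dq q dist_snd_le[of q "(v,w)"] by simp
  have nu: "norm u < norm v + 1" using du by (metis dist_norm norm_triangle_sub add.commute
        add_less_cancel_left order_le_less_trans)
  have "y + h *\<^sub>R w' \<in> msum (F (x + h *\<^sub>R u)) P"
    using qm q unfolding gph_def Fup_def by simp
  then obtain f1 p where f1: "f1 \<in> F (x + h *\<^sub>R u)" and p: "p \<in> P" and eq1: "y + h *\<^sub>R w' = f1 + p"
    unfolding msum_def by blast
  have "norm (h *\<^sub>R u) < r"
  proof -
    have "norm (h *\<^sub>R u) = h * norm u" using h by simp
    also have "\<dots> \<le> h * (norm v + 1)" using nu h by (intro mult_left_mono) auto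
    also have "\<dots> < r"
    proof -
      have np: "norm v + 1 > 0" by (simp add: add_nonneg_pos)
      have "h < r / (norm v + 1)" using h by simp
      then show ?thesis using np by (simp add: pos_less_divide_eq)
    qed
    finally show ?thesis .
  qed
  then have "x + h *\<^sub>R u \<in> U" using U by (auto simp: dist_norm)
  moreover have "x \<in> U" using U r by auto
  ultimately have "F (x + h *\<^sub>R u) \<subseteq> msum (F x) (cball 0 (l * norm ((x + h *\<^sub>R u) - x)))"
    using L by blast
  with f1 obtain f b where f: "f \<in> F x" and b: "norm b \<le> l * (h * norm u)" and eq2: "f1 = f + b"
    unfolding msum_def using h by auto
  define H where "H = h / tk"
  define u' where "u' = tk *\<^sub>R w' - (tk / h) *\<^sub>R b"
  have "0 < H" using h tk H_def by simp
  moreover have "H < d" using h tk unfolding H_def by (simp add: field_simps)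
  moreover have "y + H *\<^sub>R u' \<in> msum (F x) P"
  proof -
    have "y + H *\<^sub>R u' = y + h *\<^sub>R w' - b" using h tk unfolding H_def u'_def
      by (simp add: algebra_simps)
    also have "\<dots> = f + p" using eq1 eq2 by (simp add: algebra_simps)
    finally show ?thesis using f p unfolding msum_def by blast
  qed
  moreover have "dist u' z < e"
  proof -
    have "dist u' z \<le> norm (tk *\<^sub>R w' - tk *\<^sub>R w) + dist (tk *\<^sub>R w) z + norm ((tk / h) *\<^sub>R b)"
    proof -
      have eq: "u' - z = ((tk *\<^sub>R w' - tk *\<^sub>R w) + (tk *\<^sub>R w - z)) - (tk / h) *\<^sub>R b"
        by (simp add: u'_def algebra_simps)
      have "norm (u' - z) \<le> norm ((tk *\<^sub>R w' - tk *\<^sub>R w) + (tk *\<^sub>R w - z)) + norm ((tk / h) *\<^sub>R b)"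
        unfolding eq by (rule norm_triangle_ineq4)
      also have "\<dots> \<le> norm (tk *\<^sub>R w' - tk *\<^sub>R w) + norm (tk *\<^sub>R w - z) + norm ((tk / h) *\<^sub>R b)"
        using norm_triangle_ineq by (intro add_right_mono) blast
      finally show ?thesis by (simp add: dist_norm)
    qed
    also have "norm (tk *\<^sub>R w' - tk *\<^sub>R w) \<le> tk"
    proof -
      have "norm (tk *\<^sub>R w' - tk *\<^sub>R w) = tk * dist w' w"
        using tk by (simp add: dist_norm scaleR_diff_right[symmetric])
      also have "\<dots> \<le> tk" using dw tk by simp
      finally show ?thesis .
    qed
    also have "norm ((tk / h) *\<^sub>R b) \<le> tk * (l * (norm v + 1))"
    proof -
      have "norm ((tk / h) *\<^sub>R b) = (tk / h) * norm b" using tk h by simp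
      also have "\<dots> \<le> (tk / h) * (l * (h * norm u))" using b tk h by (intro mult_left_mono) auto
      also have "\<dots> = tk * (l * norm u)" using h by simp
      also have "\<dots> \<le> tk * (l * (norm v + 1))" using tk l nu by (intro mult_left_mono) auto
      finally show ?thesis .
    qed
    finally have "dist u' z \<le> tk * C + dist (tk *\<^sub>R w) z" unfolding C_def by (simp add: algebra_simps)
    then show ?thesis using k1 k2 tk_def w_def by simp
  qed
  ultimately show "\<exists>h u. 0 < h \<and> h < d \<and> dist u z < e \<and> y + h *\<^sub>R u \<in> msum (F x) P" by blast
qed


lemma lemC:
  fixes F :: "'a::real_normed_vector \<Rightarrow> 'b::euclidean_space set"
  assumes l: "l > 0" and r: "r > 0" and U: "ball x r \<subseteq> U"
    and L: "\<forall>x1\<in>U. \<forall>x2\<in>U. F x1 \<subseteq> msum (F x2) (cball 0 (l * norm (x1 - x2)))"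
    and y: "y \<in> F x"
  shows "\<exists>w. w \<in> DF F x y v"
proof -
  define c where "c = r / (norm v + 1)"
  have np: "norm v + 1 > 0" by (simp add: add_nonneg_pos)
  have c: "c > 0" using r np c_def by simp
  have cv: "c * norm v < r"
  proof -
    have "c * norm v < c * (norm v + 1)" using c by simp
    also have "\<dots> = r" using np c_def by simp
    finally show ?thesis .
  qed
  define h where "h k = c * inverse (real (Suc k))" for k
  have hp: "h k > 0" for k using c h_def by simp
  have hc: "h k \<le> c" for k
  proof -
    have "inverse (real (Suc k)) \<le> 1" by (rule inverse_le_1_iff[THEN iffD2]) simp
    then show ?thesis unfolding h_def using c by (simp add: mult_left_le)
  qed
  have "\<exists>f. f \<in> F (x + h k *\<^sub>R v) \<and> norm (y - f) \<le> l * (h k * norm v)" for k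
  proof -
    have "norm (h k *\<^sub>R v) = h k * norm v" using hp[of k] by simp
    also have "\<dots> \<le> c * norm v" using hc[of k] by (intro mult_right_mono) auto
    finally have "norm (h k *\<^sub>R v) < r" using cv by simp
    then have "x + h k *\<^sub>R v \<in> U" using U by (auto simp: dist_norm)
    moreover have "x \<in> U" using U r by auto
    ultimately have "F x \<subseteq> msum (F (x + h k *\<^sub>R v)) (cball 0 (l * norm (x - (x + h k *\<^sub>R v))))"
      using L by blast
    with y obtain f b where "f \<in> F (x + h k *\<^sub>R v)" "norm b \<le> l * norm (h k *\<^sub>R v)" "y = f + b"
      unfolding msum_def by auto
    then show ?thesis using hp[of k] by (auto simp: algebra_simps)
  qed
  then obtain f where f: "\<And>k. f k \<in> F (x + h k *\<^sub>R v)" and fb: "\<And>k. norm (y - f k) \<le> l * (h k * norm v)"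
    by metis
  define w where "w k = inverse (h k) *\<^sub>R (f k - y)" for k
  have wb: "norm (w k) \<le> l * norm v" for k
  proof -
    have "norm (w k) = inverse (h k) * norm (y - f k)" using hp[of k] unfolding w_def
      by (simp add: norm_minus_commute)
    also have "\<dots> \<le> inverse (h k) * (l * (h k * norm v))" using fb[of k] hp[of k]
      by (intro mult_left_mono) auto
    also have "\<dots> = l * norm v" using hp[of k] by simp
    finally show ?thesis .
  qed
  have "bounded (range w)" using wb unfolding bounded_iff by blast
  then obtain w0 \<sigma> where sm: "strict_mono \<sigma>" and wl: "(w \<circ> \<sigma>) \<longlonglongrightarrow> w0"
    using bounded_imp_convergent_subsequence by blast
  have h0: "h \<longlonglongrightarrow> 0" unfolding h_def
    using tendsto_mult[OF tendsto_const[of c] LIMSEQ_inverse_real_of_nat] by simp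
  have "(v, w0) \<in> contingent_cone (gph F) (x, y)"
    unfolding contingent_cone_def
  proof (intro CollectI exI[of _ "h \<circ> \<sigma>"] exI[of _ "\<lambda>k. (v, w (\<sigma> k))"] conjI allI)
    show "(h \<circ> \<sigma>) \<longlonglongrightarrow> 0" using LIMSEQ_subseq_LIMSEQ[OF h0 sm] .
    show "(\<lambda>k. (v, w (\<sigma> k))) \<longlonglongrightarrow> (v, w0)"
      using tendsto_Pair[OF tendsto_const wl] by (simp add: o_def)
    fix k
    show "0 < (h \<circ> \<sigma>) k" using hp by simp
    have "y + h (\<sigma> k) *\<^sub>R w (\<sigma> k) = f (\<sigma> k)" unfolding w_def using hp[of "\<sigma> k"] by simp
    then show "(x, y) + (h \<circ> \<sigma>) k *\<^sub>R (v, w (\<sigma> k)) \<in> gph F"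
      using f[of "\<sigma> k"] unfolding gph_def by simp
  qed
  then show ?thesis unfolding DF_def by blast
qed

theorem proposition6p6:
  fixes F :: "'a::real_normed_vector \<Rightarrow> 'b::euclidean_space set"
    and P :: "'b set" and x :: 'a and y :: 'b
  assumes "ordering_cone P"
    and "y \<in> F x"
    and "lipschitz_around F x"
    and "y \<in> proper_efficient (F x) P"
  shows "DF (Fup F P) x y 0 \<inter> uminus ` P = {0} \<and>
         (\<forall>v. P_bounded (DF (Fup F P) x y v) P \<and> P_bounded (DF F x y v) P)"
proof -
  obtain l U where l: "l > 0" and Uo: "open U" and xU: "x \<in> U"
    and L: "\<forall>x1\<in>U. \<forall>x2\<in>U. F x1 \<subseteq> msum (F x2) (cball 0 (l * norm (x1 - x2)))"
    using assms(3) unfolding lipschitz_around_def by blast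
  obtain r where r: "r > 0" and U: "ball x r \<subseteq> U" using Uo xU open_contains_ball by blast
  have T: "contingent_cone (msum (F x) P) y \<inter> uminus ` P = {0}"
    using assms(4) unfolding proper_efficient_def by blast
  have P0: "0 \<in> P" using assms(1) unfolding ordering_cone_def by blast
  have m0: "0 \<in> uminus ` P" using P0 by force
  have sub: "gph F \<subseteq> gph (Fup F P)"
    unfolding gph_def Fup_def msum_def using P0 by force
  have DFsub: "DF F x y v \<subseteq> DF (Fup F P) x y v" for v
    unfolding DF_def using cc_mono[OF sub] by blast
  have ne: "\<exists>w. w \<in> DF F x y v" for v using lemC[OF l r U L assms(2)] .
  have B: "recession_cone (DF (Fup F P) x y v) \<inter> uminus ` P = {0}" for v
  proof
    show "recession_cone (DF (Fup F P) x y v) \<inter> uminus ` P \<subseteq> {0}"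
      using lemB[OF l r U L, of _ P y v] T by blast
    obtain w where "w \<in> DF F x y v" using ne by blast
    then have "0 \<in> recession_cone (DF (Fup F P) x y v)" using DFsub rc_zero by blast
    then show "{0} \<subseteq> recession_cone (DF (Fup F P) x y v) \<inter> uminus ` P" using m0 by blast
  qed
  have part2: "P_bounded (DF (Fup F P) x y v) P \<and> P_bounded (DF F x y v) P" for v
  proof
    show "P_bounded (DF (Fup F P) x y v) P" using B unfolding P_bounded_def by blast
    have "recession_cone (DF F x y v) \<subseteq> recession_cone (DF (Fup F P) x y v)"
      using rc_mono[OF DFsub] .
    moreover obtain w where "w \<in> DF F x y v" using ne by blast
    ultimately show "P_bounded (DF F x y v) P" using B[of v] rc_zero m0 unfolding P_bounded_def by blast
  qed
  have part1: "DF (Fup F P) x y 0 \<inter> uminus ` P = {0}"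
  proof
    show "DF (Fup F P) x y 0 \<inter> uminus ` P \<subseteq> {0}"
    proof
      fix w assume w: "w \<in> DF (Fup F P) x y 0 \<inter> uminus ` P"
      have "w \<in> recession_cone (DF (Fup F P) x y 0)"
        unfolding recession_cone_def
      proof (intro CollectI exI[of _ "\<lambda>k. inverse (real (Suc k))"] exI[of _ "\<lambda>k. real (Suc k) *\<^sub>R w"] conjI allI)
        show "(\<lambda>k. inverse (real (Suc k))) \<longlonglongrightarrow> 0" by (rule LIMSEQ_inverse_real_of_nat)
        show "(\<lambda>k. inverse (real (Suc k)) *\<^sub>R real (Suc k) *\<^sub>R w) \<longlonglongrightarrow> w" by simp
        fix k
        show "0 < inverse (real (Suc k))" by simp
        have "(0, w) \<in> contingent_cone (gph (Fup F P)) (x, y)" using w unfolding DF_def by simp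
        from cc_scale[OF this, of "real (Suc k)"]
        show "real (Suc k) *\<^sub>R w \<in> DF (Fup F P) x y 0" unfolding DF_def by simp
      qed
      then show "w \<in> {0}" using B[of 0] w by blast
    qed
    have "(x, y) \<in> gph (Fup F P)" using sub assms(2) unfolding gph_def by blast
    then have "(0::'a\<times>'b) \<in> contingent_cone (gph (Fup F P)) (x, y)" by (rule cc_zero)
    then have "0 \<in> DF (Fup F P) x y 0" unfolding DF_def by (simp add: zero_prod_def)
    then show "{0} \<subseteq> DF (Fup F P) x y 0 \<inter> uminus ` P" using m0 by blast
  qed
  show ?thesis using part1 part2 by blast
qed

end
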